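(* Let $\Gamma$ be a layered graph, $n\ge2$, and let $a=\sum_{v\in V_n}\alpha_v v$ be a nonzero element of $B_n$. Then $\kappa_a=\bigcap_{v\in V_n:\,\alpha_v\neq0}\kappa_v$.
   Context: A layered graph is a finite directed graph $\Gamma=(V,E)$ with $V=\bigsqcup_{i=0}^{N}V_i$ such that every edge from $V_i$ goes to $V_{i-1}$; $|v|=i$ for $v\in V_i$, $V_+=\bigsqcup_{i\ge1}V_i$, $V_{\ge k}=\bigsqcup_{i\ge k}V_i$, $S(v)=\{w:(v,w)\in E\}$, nonempty for $v\in V_+$. Over a field $\mathbb F$, $B(\Gamma)=T(V_+)/R_B$, where $T(V_+)$ is the free algebra and $R_B$ is the two-sided ideal generated by $\{vw: v,w\in V_+,(v,w)\notin E\}\cup\{v\sum_{w\in S(v)}w: v\in V_{\ge2}\}$. It is doubly graded, $B(\Gamma)_{m,n}$ being spanned by images of $v_1\cdots v_m$ with $\sum|v_i|=n$. $B_n=B(\Gamma)_{1,n}$ is the span of $V_n$, in which $V_n$ is a basis. For $a\in B_n$ ($n\ge2$), $\kappa_a$ is the kernel of the linear map $B_{n-1}\to B(\Gamma)$, $b\mapsto ab$. *)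

theory Defs
  imports Main
begin

definition layered_graph :: "'v set \<Rightarrow> ('v \<times> 'v) set \<Rightarrow> ('v \<Rightarrow> nat) \<Rightarrow> bool" where
  "layered_graph V E lev \<longleftrightarrow>
     finite V \<and> E \<subseteq> V \<times> V \<and>
     (\<forall>(v,w)\<in>E. lev v \<ge> 1 \<and> lev w + 1 = lev v) \<and>
     (\<forall>v\<in>V. lev v \<ge> 1 \<longrightarrow> (\<exists>w. (v,w) \<in> E))"

definition Vplus :: "'v set \<Rightarrow> ('v \<Rightarrow> nat) \<Rightarrow> 'v set" where
  "Vplus V lev = {v\<in>V. lev v \<ge> 1}"

definition succs :: "('v \<times> 'v) set \<Rightarrow> 'v \<Rightarrow> 'v set" where
  "succs E v = {w. (v,w) \<in> E}"

text \<open>Elements of the free algebra T(V_+) over a field are represented as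
  (finitely supported) coefficient functions on words.\<close>

definition word :: "'v list \<Rightarrow> ('v list \<Rightarrow> 'a::field)" where
  "word u = (\<lambda>x. if x = u then 1 else 0)"

definition lmul :: "'v \<Rightarrow> ('v list \<Rightarrow> 'a::field) \<Rightarrow> ('v list \<Rightarrow> 'a)" where
  "lmul v f = (\<lambda>x. case x of [] \<Rightarrow> 0 | y # ys \<Rightarrow> if y = v then f ys else 0)"

definition rmul :: "'v \<Rightarrow> ('v list \<Rightarrow> 'a::field) \<Rightarrow> ('v list \<Rightarrow> 'a)" where
  "rmul v f = (\<lambda>x. if x \<noteq> [] \<and> last x = v then f (butlast x) else 0)"

definition RB_gens :: "'v set \<Rightarrow> ('v \<times> 'v) set \<Rightarrow> ('v \<Rightarrow> nat) \<Rightarrow> ('v list \<Rightarrow> 'a::field) set" where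
  "RB_gens V E lev =
     {word [v, w] | v w. v \<in> Vplus V lev \<and> w \<in> Vplus V lev \<and> (v, w) \<notin> E} \<union>
     {(\<lambda>x. \<Sum>w\<in>succs E v. word [v, w] x) | v. v \<in> V \<and> lev v \<ge> 2}"

inductive_set RB :: "'v set \<Rightarrow> ('v \<times> 'v) set \<Rightarrow> ('v \<Rightarrow> nat) \<Rightarrow> ('v list \<Rightarrow> 'a::field) set"
  for V E lev where
  gen: "g \<in> RB_gens V E lev \<Longrightarrow> g \<in> RB V E lev"
| zero: "(\<lambda>_. 0) \<in> RB V E lev"
| add: "f \<in> RB V E lev \<Longrightarrow> g \<in> RB V E lev \<Longrightarrow> (\<lambda>x. f x + g x) \<in> RB V E lev"
| smult: "f \<in> RB V E lev \<Longrightarrow> (\<lambda>x. c * f x) \<in> RB V E lev"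
| lmul: "f \<in> RB V E lev \<Longrightarrow> v \<in> Vplus V lev \<Longrightarrow> lmul v f \<in> RB V E lev"
| rmul: "f \<in> RB V E lev \<Longrightarrow> v \<in> Vplus V lev \<Longrightarrow> rmul v f \<in> RB V E lev"

text \<open>An element of B_n is given by its coefficient vector (alpha v) on the basis V_n.\<close>

definition in_Bn :: "'v set \<Rightarrow> ('v \<Rightarrow> nat) \<Rightarrow> nat \<Rightarrow> ('v \<Rightarrow> 'a::field) \<Rightarrow> bool" where
  "in_Bn V lev n \<alpha> \<longleftrightarrow> (\<forall>v. \<alpha> v \<noteq> 0 \<longrightarrow> v \<in> V \<and> lev v = n)"

text \<open>Product in T(V_+) of two degree-one (in the first grading) elements.\<close>

definition prod1 :: "('v \<Rightarrow> 'a::field) \<Rightarrow> ('v \<Rightarrow> 'a) \<Rightarrow> ('v list \<Rightarrow> 'a)" where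
  "prod1 \<alpha> \<beta> = (\<lambda>x. case x of [v, w] \<Rightarrow> \<alpha> v * \<beta> w | _ \<Rightarrow> 0)"

text \<open>kappa_a = kernel of b \<mapsto> ab from B_{n-1} to B(Gamma) = T(V_+)/R_B.\<close>

definition kappa :: "'v set \<Rightarrow> ('v \<times> 'v) set \<Rightarrow> ('v \<Rightarrow> nat) \<Rightarrow> nat \<Rightarrow> ('v \<Rightarrow> 'a::field) \<Rightarrow> ('v \<Rightarrow> 'a) set" where
  "kappa V E lev n \<alpha> = {\<beta>. in_Bn V lev (n - 1) \<beta> \<and> prod1 \<alpha> \<beta> \<in> RB V E lev}"

definition basis_vec :: "'v \<Rightarrow> ('v \<Rightarrow> 'a::field)" where
  "basis_vec v = (\<lambda>u. if u = v then 1 else 0)"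

end

theory Submission
  imports Defs
begin

lemma RB_sum:
  assumes "finite A" "\<forall>i\<in>A. f i \<in> RB V E lev"
  shows "(\<lambda>x. \<Sum>i\<in>A. f i x) \<in> RB V E lev"
  using assms
proof (induction A rule: finite_induct)
  case empty
  then show ?case by (simp add: RB.zero)
next
  case (insert a A)
  then have "(\<lambda>x. f a x + (\<Sum>i\<in>A. f i x)) \<in> RB V E lev"
    by (intro RB.add) auto
  then show ?case using insert by simp
qed

definition Pinv :: "('v \<times> 'v) set \<Rightarrow> ('v list \<Rightarrow> 'a::field) \<Rightarrow> bool" where
  "Pinv E f \<longleftrightarrow> (\<forall>x. length x \<le> 1 \<longrightarrow> f x = 0) \<and>
     (\<forall>v w w'. (v,w)\<in>E \<longrightarrow> (v,w')\<in>E \<longrightarrow> f [v,w] = f [v,w'])"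

lemma succs_finite: "layered_graph V E lev \<Longrightarrow> finite (succs E v)"
proof -
  assume "layered_graph V E lev"
  then have "finite V" "E \<subseteq> V \<times> V" by (auto simp: layered_graph_def)
  then have "succs E v \<subseteq> V" by (auto simp: succs_def)
  then show ?thesis using \<open>finite V\<close> finite_subset by blast
qed

lemma len_le1: "length (x::'v list) \<le> 1 \<Longrightarrow> x = [] \<or> (\<exists>a. x = [a])"
  by (cases x) auto

lemma RB_inv:
  fixes f :: "'v list \<Rightarrow> 'a::field" and V :: "'v set"
  assumes "f \<in> RB V E lev" "layered_graph V E lev"
  shows "Pinv E f"
  using assms(1)
proof (induction rule: RB.induct)
  case (gen g)
  then show ?case
  proof (auto simp: RB_gens_def)
    fix v w :: 'v assume "(v,w) \<notin> E"
    then show "Pinv E (word [v, w] :: 'v list \<Rightarrow> 'a)"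
      unfolding Pinv_def word_def by auto
  next
    fix v :: 'v
    have fin: "finite (succs E v)" using succs_finite[OF assms(2)] .
    show "Pinv E ((\<lambda>x. \<Sum>w\<in>succs E v. word [v, w] x) :: 'v list \<Rightarrow> 'a)"
      unfolding Pinv_def
    proof (intro conjI allI impI)
      fix x :: "'v list" assume "length x \<le> 1"
      then have nx: "\<forall>w. x \<noteq> [v,w]" by auto
      show "(\<Sum>w\<in>succs E v. word [v, w] x) = (0::'a)"
        using nx by (simp add: word_def)
    next
      fix a b b' assume "(a,b)\<in>E" "(a,b')\<in>E"
      have e: "\<And>c. (a,c)\<in>E \<Longrightarrow> (\<Sum>w\<in>succs E v. word [v, w] [a,c]) = (if a = v then 1 else (0::'a))"
        using fin by (auto simp: word_def succs_def)
      show "(\<Sum>w\<in>succs E v. word [v, w] [a,b] :: 'a) = (\<Sum>w\<in>succs E v. word [v, w] [a,b'])"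
        using e[OF \<open>(a,b)\<in>E\<close>] e[OF \<open>(a,b')\<in>E\<close>] by simp
    qed
  qed
next
  case zero
  then show ?case by (simp add: Pinv_def)
next
  case (add f g)
  have f1: "\<And>x. length x \<le> 1 \<Longrightarrow> f x = 0" and g1: "\<And>x. length x \<le> 1 \<Longrightarrow> g x = 0"
    and f2: "\<And>v w w'. (v,w)\<in>E \<Longrightarrow> (v,w')\<in>E \<Longrightarrow> f [v,w] = f [v,w']"
    and g2: "\<And>v w w'. (v,w)\<in>E \<Longrightarrow> (v,w')\<in>E \<Longrightarrow> g [v,w] = g [v,w']"
    using add.IH unfolding Pinv_def by blast+
  show ?case unfolding Pinv_def
  proof (intro conjI allI impI)
    fix x :: "'v list" assume "length x \<le> 1"
    then show "f x + g x = 0" using f1 g1 by simp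
  next
    fix v w w' assume "(v,w)\<in>E" "(v,w')\<in>E"
    then show "f [v,w] + g [v,w] = f [v,w'] + g [v,w']" using f2[of v w w'] g2[of v w w'] by simp
  qed
next
  case (smult f c)
  have f1: "\<And>x. length x \<le> 1 \<Longrightarrow> f x = 0"
    and f2: "\<And>v w w'. (v,w)\<in>E \<Longrightarrow> (v,w')\<in>E \<Longrightarrow> f [v,w] = f [v,w']"
    using smult.IH unfolding Pinv_def by blast+
  show ?case unfolding Pinv_def
  proof (intro conjI allI impI)
    fix x :: "'v list" assume "length x \<le> 1"
    then show "c * f x = 0" using f1 by simp
  next
    fix v w w' assume "(v,w)\<in>E" "(v,w')\<in>E"
    then show "c * f [v,w] = c * f [v,w']" using f2[of v w w'] by simp
  qed
next
  case (lmul f v)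
  have f1: "\<And>x. length x \<le> 1 \<Longrightarrow> f x = 0"
    using lmul.IH unfolding Pinv_def by blast
  show ?case unfolding Pinv_def
  proof (intro conjI allI impI)
    fix x :: "'v list" assume "length x \<le> 1"
    then have "x = [] \<or> (\<exists>a. x = [a])" by (rule len_le1)
    then show "lmul v f x = 0" using f1[of "[]"] by (auto simp: lmul_def)
  next
    fix a w w' assume "(a,w)\<in>E" "(a,w')\<in>E"
    show "lmul v f [a,w] = lmul v f [a,w']" using f1[of "[w]"] f1[of "[w']"] by (simp add: lmul_def)
  qed
next
  case (rmul f v)
  have f1: "\<And>x. length x \<le> 1 \<Longrightarrow> f x = 0"
    using rmul.IH unfolding Pinv_def by blast
  show ?case unfolding Pinv_def
  proof (intro conjI allI impI)
    fix x :: "'v list" assume "length x \<le> 1"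
    then have "x = [] \<or> (\<exists>a. x = [a])" by (rule len_le1)
    then show "rmul v f x = 0" using f1[of "[]"] by (auto simp: rmul_def)
  next
    fix a w w' assume "(a,w)\<in>E" "(a,w')\<in>E"
    show "rmul v f [a,w] = rmul v f [a,w']" using f1[of "[a]"] by (simp add: rmul_def)
  qed
qed

theorem mainTheorem8:
  fixes V :: "'v set" and E :: "('v \<times> 'v) set" and lev :: "'v \<Rightarrow> nat"
    and n :: nat and \<alpha> :: "'v \<Rightarrow> 'a::field"
  assumes "layered_graph V E lev"
    and "n \<ge> 2"
    and "in_Bn V lev n \<alpha>"
    and "\<alpha> \<noteq> (\<lambda>_. 0)"
  shows "kappa V E lev n \<alpha> =
           (\<Inter>v\<in>{v\<in>V. lev v = n \<and> \<alpha> v \<noteq> 0}. kappa V E lev n (basis_vec v :: 'v \<Rightarrow> 'a))"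
proof (intro equalityI subsetI)
  fix \<beta> assume b: "\<beta> \<in> kappa V E lev n \<alpha>"
  then have bB: "in_Bn V lev (n - 1) \<beta>" and pr: "prod1 \<alpha> \<beta> \<in> RB V E lev"
    by (auto simp: kappa_def)
  have P: "Pinv E (prod1 \<alpha> \<beta>)" using RB_inv[OF pr assms(1)] .
  have finV: "finite V" using assms(1) by (auto simp: layered_graph_def)
  show "\<beta> \<in> (\<Inter>v\<in>{v\<in>V. lev v = n \<and> \<alpha> v \<noteq> 0}. kappa V E lev n (basis_vec v :: 'v \<Rightarrow> 'a))"
  proof (rule INT_I)
    fix v assume v: "v \<in> {v\<in>V. lev v = n \<and> \<alpha> v \<noteq> 0}"
    have const: "\<And>w w'. (v,w)\<in>E \<Longrightarrow> (v,w')\<in>E \<Longrightarrow> \<beta> w = \<beta> w'"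
    proof -
      fix w w' assume "(v,w)\<in>E" "(v,w')\<in>E"
      have P2: "\<forall>v w w'. (v,w)\<in>E \<longrightarrow> (v,w')\<in>E \<longrightarrow> prod1 \<alpha> \<beta> [v,w] = prod1 \<alpha> \<beta> [v,w']"
        using P unfolding Pinv_def by blast
      then have "prod1 \<alpha> \<beta> [v,w] = prod1 \<alpha> \<beta> [v,w']" using \<open>(v,w)\<in>E\<close> \<open>(v,w')\<in>E\<close> by blast
      then show "\<beta> w = \<beta> w'" using v by (simp add: prod1_def)
    qed
    obtain w0 where w0: "(v,w0) \<in> E" using assms(1,2) v by (auto simp: layered_graph_def)
    define c where "c = \<beta> w0"
    define A where "A = {w\<in>V. \<beta> w \<noteq> 0 \<and> w \<notin> succs E v}"
    have finA: "finite A" using finV by (auto simp: A_def)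
    have finS: "finite (succs E v)" using succs_finite[OF assms(1)] .
    have eq: "prod1 (basis_vec v) \<beta> = (\<lambda>x. c * (\<Sum>w\<in>succs E v. word [v,w] x) + (\<Sum>w\<in>A. \<beta> w * word [v,w] x))"
    proof (rule ext)
      fix x :: "'v list"
      show "prod1 (basis_vec v) \<beta> x = c * (\<Sum>w\<in>succs E v. word [v,w] x) + (\<Sum>w\<in>A. \<beta> w * word [v,w] x)"
      proof (cases "\<exists>a b. x = [a,b]")
        case True
        then obtain a b where x: "x = [a,b]" by blast
        show ?thesis
        proof (cases "a = v")
          case True
          show ?thesis
          proof (cases "b \<in> succs E v")
            case True
            then have "(v,b) \<in> E" by (simp add: succs_def)
            then have "\<beta> b = c" using const[OF _ w0] by (simp add: c_def)
            have s2: "(\<Sum>w\<in>A. \<beta> w * word [v,w] x) = 0"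
              using True unfolding x \<open>a = v\<close> by (intro sum.neutral) (auto simp: A_def word_def)
            show ?thesis using \<open>\<beta> b = c\<close> s2 True finS x \<open>a = v\<close>
              by (simp add: prod1_def basis_vec_def word_def)
          next
            case False
            have "\<beta> b \<noteq> 0 \<Longrightarrow> b \<in> V" using bB by (auto simp: in_Bn_def)
            then have bA: "\<beta> b \<noteq> 0 \<Longrightarrow> b \<in> A" using False by (simp add: A_def)
            have "(\<Sum>w\<in>A. \<beta> w * word [v,w] x) = (\<Sum>w\<in>A. if w = b then \<beta> w else 0)"
              by (rule sum.cong) (auto simp: word_def x \<open>a = v\<close>)
            also have "\<dots> = (if b \<in> A then \<beta> b else 0)" using finA by (rule sum.delta)
            also have "\<dots> = \<beta> b" using bA by auto
            finally have s2: "(\<Sum>w\<in>A. \<beta> w * word [v,w] x) = \<beta> b" .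
            have s1: "(\<Sum>w\<in>succs E v. word [v,w] x) = (0::'a)"
              using False by (intro sum.neutral) (auto simp: word_def x \<open>a = v\<close>)
            show ?thesis using s1 s2 x \<open>a = v\<close>
              by (simp add: prod1_def basis_vec_def)
          qed
        next
          case False
          then show ?thesis using x by (simp add: prod1_def basis_vec_def word_def)
        qed
      next
        case False
        then have "prod1 (basis_vec v) \<beta> x = 0"
          by (auto simp: prod1_def split: list.splits)
        moreover have "\<And>w. word [v,w] x = (0::'a)" using False by (auto simp: word_def)
        ultimately show ?thesis by simp
      qed
    qed
    have vP: "v \<in> Vplus V lev" using v assms(2) by (auto simp: Vplus_def)
    have g1: "(\<lambda>x. \<Sum>w\<in>succs E v. word [v,w] x) \<in> RB V E lev"
      apply (rule RB.gen) using v assms(2) by (auto simp: RB_gens_def)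
    have g2: "\<forall>w\<in>A. (\<lambda>x. \<beta> w * word [v,w] x) \<in> RB V E lev"
    proof
      fix w assume w: "w \<in> A"
      then have "lev w = n - 1" using bB by (auto simp: A_def in_Bn_def)
      then have "w \<in> Vplus V lev" using w assms(2) by (auto simp: A_def Vplus_def)
      moreover have "(v,w) \<notin> E" using w by (auto simp: A_def succs_def)
      ultimately have "word [v,w] \<in> RB V E lev"
        using vP by (intro RB.gen) (auto simp: RB_gens_def)
      then show "(\<lambda>x. \<beta> w * word [v,w] x) \<in> RB V E lev" by (rule RB.smult)
    qed
    have "prod1 (basis_vec v) \<beta> \<in> RB V E lev"
      unfolding eq
      by (intro RB.add RB.smult g1 RB_sum[OF finA g2])
    then show "\<beta> \<in> kappa V E lev n (basis_vec v :: 'v \<Rightarrow> 'a)"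
      using bB by (simp add: kappa_def)
  qed
next
  fix \<beta> assume b: "\<beta> \<in> (\<Inter>v\<in>{v\<in>V. lev v = n \<and> \<alpha> v \<noteq> 0}. kappa V E lev n (basis_vec v :: 'v \<Rightarrow> 'a))"
  define S where "S = {v\<in>V. lev v = n \<and> \<alpha> v \<noteq> 0}"
  obtain v0 where "\<alpha> v0 \<noteq> 0" using assms(4) by auto
  then have "v0 \<in> S" using assms(3) by (auto simp: S_def in_Bn_def)
  then have bB: "in_Bn V lev (n - 1) \<beta>" using b by (auto simp: S_def kappa_def)
  have finS: "finite S" using assms(1) by (auto simp: S_def layered_graph_def)
  have mem: "\<forall>v\<in>S. (\<lambda>x. \<alpha> v * prod1 (basis_vec v) \<beta> x) \<in> RB V E lev"
    using b by (auto simp: S_def kappa_def intro: RB.smult)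
  have eq: "prod1 \<alpha> \<beta> = (\<lambda>x. \<Sum>v\<in>S. \<alpha> v * prod1 (basis_vec v) \<beta> x)"
  proof (rule ext)
    fix x :: "'v list"
    show "prod1 \<alpha> \<beta> x = (\<Sum>v\<in>S. \<alpha> v * prod1 (basis_vec v) \<beta> x)"
    proof (cases "\<exists>a b. x = [a,b]")
      case True
      then obtain a c where x: "x = [a,c]" by blast
      have "\<alpha> a \<noteq> 0 \<Longrightarrow> a \<in> S" using assms(3) by (auto simp: S_def in_Bn_def)
      then have aS: "\<alpha> a \<noteq> 0 \<Longrightarrow> a \<in> S" .
      have "(\<Sum>v\<in>S. \<alpha> v * prod1 (basis_vec v) \<beta> x) = (\<Sum>v\<in>S. if v = a then \<alpha> v * \<beta> c else 0)"
        by (rule sum.cong) (auto simp: x prod1_def basis_vec_def)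
      also have "\<dots> = (if a \<in> S then \<alpha> a * \<beta> c else 0)" using finS by (rule sum.delta)
      also have "\<dots> = prod1 \<alpha> \<beta> x" using aS by (auto simp: x prod1_def)
      finally show ?thesis by simp
    next
      case False
      then show ?thesis by (auto simp: prod1_def split: list.splits)
    qed
  qed
  have "prod1 \<alpha> \<beta> \<in> RB V E lev" unfolding eq by (rule RB_sum[OF finS mem])
  then show "\<beta> \<in> kappa V E lev n \<alpha>" using bB by (simp add: kappa_def)
qed

end
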